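(* In the setting below, suppose $M_i(1)=M_i(0)$ for all $i$, and let $\alpha\in(0,1/2)$. Suppose $\mathcal I^\alpha_{\texttt o,k}$, $1\le k\le|\mathcal S|$, are random sets (functions of the observed data), each of the form $(c,\infty)$ or $[c,\infty)$ for some $c\in\overline{\mathbb R}$, such that $\mathbb P(\tau_{\texttt o(k)}\in\mathcal I^\alpha_{\texttt o,k}\text{ for all }1\le k\le|\mathcal S|)\ge1-2\alpha$. Define $\mathcal I^\alpha_{k,\texttt{sharp}}=\mathbb R$ for $1\le k\le|\mathcal S^\complement|$ and $\mathcal I^\alpha_{k,\texttt{sharp}}=\mathcal I^\alpha_{\texttt o,k-|\mathcal S^\complement|}$ for $|\mathcal S^\complement|+1\le k\le n$. Then $\mathbb P(\tau_{(k)}\in\mathcal I^\alpha_{k,\texttt{sharp}}\text{ for all }1\le k\le n)\ge1-2\alpha$.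
   Context: There are $n$ units with fixed potential outcomes $Y_i^\star(0),Y_i^\star(1)\in\mathbb R$ and fixed potential missingness indicators $M_i(0),M_i(1)\in\{0,1\}$; $\tau_i=Y_i^\star(1)-Y_i^\star(0)$. $\boldsymbol Z\in\{0,1\}^n$ is uniform over vectors with exactly $n_1$ ones ($n_1,n_0\ge1$ fixed, $n_1+n_0=n$), independent of all potential quantities. $M_i=Z_iM_i(1)+(1-Z_i)M_i(0)$; $\mathcal S=\{i:M_i=1\}$ (fixed under $M_i(1)=M_i(0)$), $\mathcal S^\complement$ its complement. $\tau_{(1)}\le\dots\le\tau_{(n)}$ are the sorted individual effects of all units and $\tau_{\texttt o(1)}\le\dots\le\tau_{\texttt o(|\mathcal S|)}$ the sorted individual effects of units in $\mathcal S$. $\overline{\mathbb R}=\mathbb R\cup\{\pm\infty\}$. *)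

theory Defs
  imports "HOL-Probability.Probability"
begin

text \<open>Units are indexed by 0..<n. A treatment assignment is a function z :: nat => bool
  (z i = True means Z_i = 1), required to be False outside {0..<n}.\<close>

definition assignments :: "nat \<Rightarrow> nat \<Rightarrow> (nat \<Rightarrow> bool) set" where
  "assignments n n1 = {z. (\<forall>i. n \<le> i \<longrightarrow> \<not> z i) \<and> card {i. i < n \<and> z i} = n1}"

definition design :: "nat \<Rightarrow> nat \<Rightarrow> (nat \<Rightarrow> bool) pmf" where
  "design n n1 = pmf_of_set (assignments n n1)"

text \<open>k-th smallest (k starting at 1) of the individual effects of units in a finite index set A.\<close>
definition sorted_effect :: "(nat \<Rightarrow> real) \<Rightarrow> nat set \<Rightarrow> nat \<Rightarrow> real" where
  "sorted_effect tau A k = sort (map tau (sorted_list_of_set A)) ! (k - 1)"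

definition upper_interval :: "real set \<Rightarrow> bool" where
  "upper_interval I \<longleftrightarrow> (\<exists>c::ereal. I = {x. c < ereal x} \<or> I = {x. c \<le> ereal x})"

end

theory Submission
  imports Defs
begin

lemma sorted_cnt_ge:
  fixes xs :: "real list"
  assumes "sorted xs" "i < length xs"
  shows "i + 1 \<le> length (filter (\<lambda>x. x \<le> xs ! i) xs)"
proof -
  have "{0..i} \<subseteq> {p. p < length xs \<and> xs ! p \<le> xs ! i}"
    using assms by (auto simp: sorted_iff_nth_mono)
  then have "card {0..i} \<le> card {p. p < length xs \<and> xs ! p \<le> xs ! i}"
    by (intro card_mono) auto
  then show ?thesis by (simp add: length_filter_conv_card)
qed

lemma sorted_cnt_le:
  fixes xs :: "real list"
  assumes "sorted xs" "i < length xs" "i + 1 \<le> length (filter (\<lambda>x. x \<le> v) xs)"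
  shows "xs ! i \<le> v"
proof (rule ccontr)
  assume "\<not> xs ! i \<le> v"
  then have "{p. p < length xs \<and> xs ! p \<le> v} \<subseteq> {..<i}"
    using assms(1,2) by (auto simp: sorted_iff_nth_mono) (meson less_le_trans not_le)
  then have "card {p. p < length xs \<and> xs ! p \<le> v} \<le> i"
    by (metis card_lessThan card_mono finite_lessThan)
  then show False using assms(3) by (simp add: length_filter_conv_card)
qed

lemma cnt_sort:
  fixes tau :: "nat \<Rightarrow> real"
  assumes "finite B"
  shows "length (filter P (sort (map tau (sorted_list_of_set B)))) = card {i\<in>B. P (tau i)}"
proof -
  have "length (filter P (sort (map tau (sorted_list_of_set B))))
      = size (filter_mset P (mset (sort (map tau (sorted_list_of_set B)))))"
    by (metis mset_filter size_mset)
  also have "\<dots> = size (filter_mset P (mset (map tau (sorted_list_of_set B))))" by simp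
  also have "\<dots> = length (filter P (map tau (sorted_list_of_set B)))"
    by (metis mset_filter size_mset)
  also have "\<dots> = length (filter (P \<circ> tau) (sorted_list_of_set B))" by (simp add: filter_map)
  also have "\<dots> = card ({x. (P \<circ> tau) x} \<inter> set (sorted_list_of_set B))"
    by (simp add: distinct_length_filter)
  also have "\<dots> = card {i\<in>B. P (tau i)}" using assms by (auto intro: arg_cong[where f=card])
  finally show ?thesis .
qed

lemma order_stat:
  fixes tau :: "nat \<Rightarrow> real"
  assumes "finite B" "A \<subseteq> B" "card (B - A) < k" "k \<le> card B"
  shows "sorted_effect tau A (k - card (B - A)) \<le> sorted_effect tau B k"
proof -
  define m where "m = card (B - A)"
  define xs where "xs = sort (map tau (sorted_list_of_set B))"
  define ys where "ys = sort (map tau (sorted_list_of_set A))"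
  have fA: "finite A" using assms finite_subset by blast
  have lx: "length xs = card B" by (simp add: xs_def)
  have ly: "length ys = card A" by (simp add: ys_def)
  have cB: "card B = card A + m" unfolding m_def using assms fA
    by (metis card_Diff_subset add.commute le_add_diff_inverse card_mono)
  define v where "v = xs ! (k - 1)"
  have k1: "1 \<le> k" using assms(3) by linarith
  have sx: "sorted xs" unfolding xs_def by simp
  have "k - 1 + 1 \<le> length (filter (\<lambda>x. x \<le> v) xs)"
    unfolding v_def by (rule sorted_cnt_ge[OF sx]) (use k1 assms(4) lx in linarith)
  moreover have "length (filter (\<lambda>x. x \<le> v) xs) = card {i\<in>B. tau i \<le> v}"
    unfolding xs_def by (rule cnt_sort[OF assms(1)])
  ultimately have c1: "k \<le> card {i\<in>B. tau i \<le> v}" using k1 by simp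
  have h: "{i\<in>B. tau i \<le> v} \<subseteq> {i\<in>A. tau i \<le> v} \<union> (B - A)" by auto
  have "card {i\<in>B. tau i \<le> v} \<le> card ({i\<in>A. tau i \<le> v} \<union> (B - A))"
    using h fA assms(1) by (intro card_mono) auto
  also have "\<dots> \<le> card {i\<in>A. tau i \<le> v} + card (B - A)" by (rule card_Un_le)
  finally have c3: "card {i\<in>B. tau i \<le> v} \<le> card {i\<in>A. tau i \<le> v} + m" unfolding m_def .
  have c2: "k - m \<le> card {i\<in>A. tau i \<le> v}" using c1 c3 by linarith
  have "ys ! (k - m - 1) \<le> v"
  proof (rule sorted_cnt_le)
    show "sorted ys" by (simp add: ys_def)
    show "k - m - 1 < length ys" using ly cB assms(3,4) unfolding m_def by linarith
    show "k - m - 1 + 1 \<le> length (filter (\<lambda>x. x \<le> v) ys)"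
      using c2 cnt_sort[OF fA] assms(3) unfolding m_def ys_def by simp
  qed
  then show ?thesis unfolding sorted_effect_def m_def[symmetric]
    by (simp add: xs_def ys_def v_def)
qed

lemma upper_mono:
  assumes "upper_interval I" "x \<in> I" "x \<le> y"
  shows "y \<in> I"
  using assms unfolding upper_interval_def
  by (auto intro: less_le_trans order_trans)

theorem corollary1:
  fixes n n1 n0 :: nat
    and Y0 Y1 :: "nat \<Rightarrow> real"
    and M0 M1 :: "nat \<Rightarrow> bool"
    and \<alpha> :: real
    and Io :: "(nat \<Rightarrow> bool) \<Rightarrow> nat \<Rightarrow> real set"
  defines "\<tau> \<equiv> (\<lambda>i. Y1 i - Y0 i)"
    and "S \<equiv> {i. i < n \<and> M1 i}"
  assumes "n1 \<ge> 1" and "n0 \<ge> 1" and "n = n1 + n0"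
    and "\<forall>i. M1 i = M0 i"
    and "0 < \<alpha>" and "\<alpha> < 1/2"
    and "\<forall>z k. 1 \<le> k \<and> k \<le> card S \<longrightarrow> upper_interval (Io z k)"
    and "measure_pmf.prob (design n n1)
           {z. \<forall>k. 1 \<le> k \<and> k \<le> card S \<longrightarrow> sorted_effect \<tau> S k \<in> Io z k} \<ge> 1 - 2 * \<alpha>"
  shows "measure_pmf.prob (design n n1)
           {z. \<forall>k. 1 \<le> k \<and> k \<le> n \<longrightarrow>
                 sorted_effect \<tau> {..<n} k \<in>
                   (if k \<le> card ({..<n} - S) then UNIV else Io z (k - card ({..<n} - S)))}
         \<ge> 1 - 2 * \<alpha>"
proof -
  have sub: "S \<subseteq> {..<n}" unfolding S_def by auto
  have cn: "card {..<n} = card S + card ({..<n} - S)"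
    using sub by (metis card_Diff_subset card_mono finite_lessThan finite_subset le_add_diff_inverse)
  have "{z. \<forall>k. 1 \<le> k \<and> k \<le> card S \<longrightarrow> sorted_effect \<tau> S k \<in> Io z k}
    \<subseteq> {z. \<forall>k. 1 \<le> k \<and> k \<le> n \<longrightarrow>
                 sorted_effect \<tau> {..<n} k \<in>
                   (if k \<le> card ({..<n} - S) then UNIV else Io z (k - card ({..<n} - S)))}"
  proof (safe)
    fix z k
    assume H: "\<forall>k. 1 \<le> k \<and> k \<le> card S \<longrightarrow> sorted_effect \<tau> S k \<in> Io z k"
      and k: "1 \<le> k" "k \<le> n"
    show "sorted_effect \<tau> {..<n} k \<in>
                   (if k \<le> card ({..<n} - S) then UNIV else Io z (k - card ({..<n} - S)))"
    proof (cases "k \<le> card ({..<n} - S)")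
      case False
      let ?j = "k - card ({..<n} - S)"
      have j: "1 \<le> ?j" "?j \<le> card S" using False k cn by auto
      have "sorted_effect \<tau> S ?j \<le> sorted_effect \<tau> {..<n} k"
        using order_stat[OF finite_lessThan sub] False k by simp
      moreover have "sorted_effect \<tau> S ?j \<in> Io z ?j" using H j by blast
      moreover have "upper_interval (Io z ?j)" using assms(9) j by blast
      ultimately show ?thesis using False upper_mono by auto
    qed simp
  qed
  then have "measure_pmf.prob (design n n1)
           {z. \<forall>k. 1 \<le> k \<and> k \<le> card S \<longrightarrow> sorted_effect \<tau> S k \<in> Io z k}
    \<le> measure_pmf.prob (design n n1)
           {z. \<forall>k. 1 \<le> k \<and> k \<le> n \<longrightarrow>
                 sorted_effect \<tau> {..<n} k \<in>
                   (if k \<le> card ({..<n} - S) then UNIV else Io z (k - card ({..<n} - S)))}"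
    by (intro measure_pmf.finite_measure_mono) simp_all
  then show ?thesis using assms(10) by linarith
qed

end
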